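(* Let $T^4=\mathbb{R}^4/\mathbb{Z}^4$, let $G$ be a constant Riemannian metric and $B$ a constant real 2-form on $T^4$ with all components $G_{IJ},B_{IJ}\in\mathbb{Q}$ (i.e. the $\mathcal N=(1,1)$ SCFT for $(T^4;G,B)$ is rational). Let $I$ be a polarizable constant complex structure on $T^4$ with which $G$ is compatible, $M_I=(T^4,I)$, and $\omega$ the associated Kähler form. Then $\omega\in \mathcal H^2(M_I)\otimes_{\mathbb{Q}}\mathbb{R}$, where $\mathcal H^2(M_I)=H^2(T^4;\mathbb{Q})\cap H^{1,1}(M_I;\mathbb{R})$. Moreover, $i\omega\in \mathcal H^2(M_I)\otimes_{\mathbb{Q}} E$, where $E\subset\mathbb{C}$ is the reflex field described below.
   Context: Coordinates $X^1,\dots,X^4$ on $T^4$, normalized so that $H_1(T^4;\mathbb{Z})=\mathbb{Z}^4$ and $2\pi\sqrt{\alpha'}=1$; $G=G_{IJ}dX^I\otimes dX^J$, $B=\frac12B_{IJ}dX^I\wedge dX^J$. $G$ compatible with $I$ means $G(Iu,Iv)=G(u,v)$. Polarizable means some $\psi\in H^2(T^4;\mathbb{Z})\cap H^{1,1}(M_I)$ has $\psi(I\cdot,\cdot)$ positive definite. The Kähler form is $\omega=\frac12\omega_{IJ}dX^I\wedge dX^J$ with $\omega_{IJ}=I^K{}_I G_{KJ}$. Under these hypotheses $M_I$ is a CM abelian surface: $\mathrm{End}(H^1(M_I;\mathbb{Q}))^{\mathrm{Hdg}}$ (Hodge-structure-preserving $\mathbb{Q}$-endomorphisms) contains a commutative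 semisimple $\mathbb{Q}$-subalgebra $F$ of dimension 4 (a CM algebra). $F$ acts on the 2-dimensional space $H^{1,0}(M_I)$ diagonalizably through two ring homomorphisms $\varphi_1,\varphi_2:F\to\mathbb{C}$ (the CM type). The reflex field is $E:=\mathbb{Q}\big(\varphi_1(a)+\varphi_2(a)\,:\,a\in F\big)\subset\mathbb{C}$; equivalently, it is the image in $\mathbb{C}$ of the (CM) field $\mathrm{End}(T_{M_I}\otimes\mathbb{Q})^{\mathrm{Hdg}}$ through its action on $H^{2,0}(M_I)$, where $T_{M_I}\otimes\mathbb{Q}$ is the orthogonal complement of $\mathcal H^2(M_I)$ in $H^2(T^4;\mathbb{Q})$ with respect to $(\psi,\chi)\mapsto\int\psi\wedge\chi$. *)

theory Defs
  imports "HOL-Analysis.Analysis"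
begin

text \<open>Constant tensors on T^4 = R^4/Z^4 in the coordinates X^1..X^4 are 4x4 real matrices
indexed by the type 4. A tangent vector u has components u$J.
A constant complex structure I acts on tangent vectors by (Iu)^K = I^K_J u^J, i.e.
I$K$J = I^K_J and Iu = I *v u.\<close>

type_synonym mat4 = "real^4^4"

definition bil :: "mat4 \<Rightarrow> real^4 \<Rightarrow> real^4 \<Rightarrow> real" where
  "bil M u v = u \<bullet> (M *v v)"

definition rat_mat :: "mat4 \<Rightarrow> bool" where
  "rat_mat M \<longleftrightarrow> (\<forall>i j. M$i$j \<in> \<rat>)"

definition int_mat :: "mat4 \<Rightarrow> bool" where
  "int_mat M \<longleftrightarrow> (\<forall>i j. M$i$j \<in> \<int>)"

definition antisym_mat :: "mat4 \<Rightarrow> bool" where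
  "antisym_mat M \<longleftrightarrow> transpose M = - M"

definition is_metric :: "mat4 \<Rightarrow> bool" where
  "is_metric G \<longleftrightarrow> transpose G = G \<and> (\<forall>u. u \<noteq> 0 \<longrightarrow> bil G u u > 0)"

definition is_complex_structure :: "mat4 \<Rightarrow> bool" where
  "is_complex_structure I \<longleftrightarrow> I ** I = - mat 1"

definition compatible :: "mat4 \<Rightarrow> mat4 \<Rightarrow> bool" where
  "compatible G I \<longleftrightarrow> (\<forall>u v. bil G (I *v u) (I *v v) = bil G u v)"

text \<open>A real constant 2-form (antisymmetric matrix) is of type (1,1) w.r.t. I iff it is I-invariant.\<close>
definition H11R :: "mat4 \<Rightarrow> mat4 set" where
  "H11R I = {A. antisym_mat A \<and> (\<forall>u v. bil A (I *v u) (I *v v) = bil A u v)}"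

text \<open>H^2(T^4;Q): 2-forms (1/2) A_IJ dX^I wedge dX^J with rational coefficients;
H^2(T^4;Z): integral coefficients.\<close>
definition H2Q :: "mat4 set" where
  "H2Q = {A. antisym_mat A \<and> rat_mat A}"

definition H2Z :: "mat4 set" where
  "H2Z = {A. antisym_mat A \<and> int_mat A}"

definition calH2 :: "mat4 \<Rightarrow> mat4 set" where
  "calH2 I = H2Q \<inter> H11R I"

definition polarizable :: "mat4 \<Rightarrow> bool" where
  "polarizable I \<longleftrightarrow> (\<exists>\<psi>. \<psi> \<in> H2Z \<and> \<psi> \<in> H11R I \<and>
      (\<forall>u v. bil \<psi> (I *v u) v = bil \<psi> (I *v v) u) \<and>
      (\<forall>u. u \<noteq> 0 \<longrightarrow> bil \<psi> (I *v u) u > 0))"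

definition kaehler_form :: "mat4 \<Rightarrow> mat4 \<Rightarrow> mat4" where
  "kaehler_form G I = (\<chi> i j. \<Sum>k\<in>UNIV. I$k$i * G$k$j)"

definition cmat :: "mat4 \<Rightarrow> complex^4^4" where
  "cmat M = (\<chi> i j. complex_of_real (M$i$j))"

text \<open>Complex constant 1-forms alpha = alpha_J dX^J are vectors in complex^4; alpha(u) = sum alpha_J u^J.
alpha(Iu) = (alpha v* I)(u). H^{1,0}: alpha(I u) = i alpha(u); H^{0,1}: alpha(I u) = -i alpha(u).\<close>
definition H10 :: "mat4 \<Rightarrow> (complex^4) set" where
  "H10 I = {\<alpha>. \<alpha> v* cmat I = \<i> *s \<alpha>}"

definition H01 :: "mat4 \<Rightarrow> (complex^4) set" where
  "H01 I = {\<alpha>. \<alpha> v* cmat I = (- \<i>) *s \<alpha>}"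

text \<open>Q-endomorphisms of H^1(T^4;Q) = Q^4 (rational 1-forms), written as rational matrices f
acting by alpha |-> alpha v* f. Hodge-structure preserving: preserves H^{1,0} and H^{0,1}.\<close>
definition hodge_endo :: "mat4 \<Rightarrow> mat4 \<Rightarrow> bool" where
  "hodge_endo I f \<longleftrightarrow> rat_mat f \<and>
     (\<forall>\<alpha>\<in>H10 I. \<alpha> v* cmat f \<in> H10 I) \<and> (\<forall>\<alpha>\<in>H01 I. \<alpha> v* cmat f \<in> H01 I)"

text \<open>F is a commutative semisimple Q-subalgebra of dimension 4 of End(H^1(M_I;Q))^Hdg.
Semisimple for a commutative finite-dimensional algebra: no nonzero nilpotents.\<close>
definition CM_algebra :: "mat4 \<Rightarrow> mat4 set \<Rightarrow> bool" where
  "CM_algebra I F \<longleftrightarrow>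
     (\<forall>a\<in>F. hodge_endo I a) \<and>
     mat 1 \<in> F \<and>
     (\<forall>a\<in>F. \<forall>b\<in>F. a + b \<in> F \<and> a ** b \<in> F) \<and>
     (\<forall>a\<in>F. \<forall>q::rat. of_rat q *\<^sub>R a \<in> F) \<and>
     (\<forall>a\<in>F. \<forall>b\<in>F. a ** b = b ** a) \<and>
     (\<forall>a\<in>F. \<forall>n::nat. ((\<lambda>x. a ** x) ^^ n) (mat 1) = 0 \<longrightarrow> a = 0) \<and>
     (\<exists>e::4 \<Rightarrow> mat4. (\<forall>i. e i \<in> F) \<and>
        (\<forall>c::4 \<Rightarrow> rat. (\<Sum>i\<in>UNIV. of_rat (c i) *\<^sub>R e i) = 0 \<longrightarrow> (\<forall>i. c i = 0)) \<and>
        (\<forall>a\<in>F. \<exists>c::4 \<Rightarrow> rat. a = (\<Sum>i\<in>UNIV. of_rat (c i) *\<^sub>R e i)))"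

definition CM_type :: "mat4 \<Rightarrow> mat4 set \<Rightarrow> (mat4 \<Rightarrow> complex) \<Rightarrow> (mat4 \<Rightarrow> complex) \<Rightarrow> bool" where
  "CM_type I F \<phi>1 \<phi>2 \<longleftrightarrow> (\<exists>\<alpha>1 \<alpha>2. \<alpha>1 \<in> H10 I \<and> \<alpha>2 \<in> H10 I \<and>
      (\<forall>z w. z *s \<alpha>1 + w *s \<alpha>2 = 0 \<longrightarrow> z = 0 \<and> w = 0) \<and>
      (\<forall>\<alpha>\<in>H10 I. \<exists>z w. \<alpha> = z *s \<alpha>1 + w *s \<alpha>2) \<and>
      (\<forall>a\<in>F. \<alpha>1 v* cmat a = \<phi>1 a *s \<alpha>1 \<and> \<alpha>2 v* cmat a = \<phi>2 a *s \<alpha>2))"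

definition gen_subfield :: "complex set \<Rightarrow> complex set" where
  "gen_subfield S = \<Inter>{K. S \<subseteq> K \<and> 0 \<in> K \<and> 1 \<in> K \<and>
      (\<forall>x\<in>K. \<forall>y\<in>K. x + y \<in> K \<and> x * y \<in> K) \<and> (\<forall>x\<in>K. - x \<in> K) \<and>
      (\<forall>x\<in>K. x \<noteq> 0 \<longrightarrow> inverse x \<in> K)}"

definition reflex_field :: "mat4 set \<Rightarrow> (mat4 \<Rightarrow> complex) \<Rightarrow> (mat4 \<Rightarrow> complex) \<Rightarrow> complex set" where
  "reflex_field F \<phi>1 \<phi>2 = gen_subfield {\<phi>1 a + \<phi>2 a | a. a \<in> F}"

definition in_tensor :: "mat4 set \<Rightarrow> complex set \<Rightarrow> complex^4^4 \<Rightarrow> bool" where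
  "in_tensor H E M \<longleftrightarrow> (\<exists>n (c::nat \<Rightarrow> complex) (A::nat \<Rightarrow> mat4).
      (\<forall>k<n. c k \<in> E \<and> A k \<in> H) \<and> M = (\<chi> i j. \<Sum>k<n. c k * complex_of_real (A k $ i $ j)))"

end

theory Submission
  imports Defs
begin


lemma dot_mv: "(A *v u) \<bullet> w = u \<bullet> (transpose A *v (w::real^'n))"
  unfolding inner_vec_def matrix_vector_mult_def transpose_def
  apply (simp add: sum_distrib_left sum_distrib_right)
  apply (subst sum.swap)
  apply (simp add: mult_ac)
  done

lemma bil_mv: "bil M (A *v u) (B *v v) = bil (transpose A ** M ** B) u v"
  unfolding bil_def by (simp add: dot_mv matrix_vector_mul_assoc matrix_mul_assoc)

lemma bil_mv1: "bil M (A *v u) v = bil (transpose A ** M) u v"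
  using bil_mv[of M A u "mat 1" v] by simp

lemma bil_axis: "bil M (axis i 1) (axis j 1) = M $ i $ j"
  unfolding bil_def inner_vec_def matrix_vector_mult_def axis_def
  by (simp add: mult_delta_left mult_delta_right)

lemma bil_ext: "(\<And>u v. bil X u v = bil Y u v) \<Longrightarrow> X = Y"
  by (metis bil_axis vec_eq_iff)

lemma bil_transpose: "bil M u v = bil (transpose M) v u"
  unfolding bil_def by (metis dot_mv inner_commute)

lemma bil_add_left: "bil M (u + w) v = bil M u v + bil M w v"
  unfolding bil_def by (simp add: inner_add_left)
lemma bil_add_right: "bil M u (v + w) = bil M u v + bil M u w"
  unfolding bil_def by (simp add: inner_add_right matrix_vector_right_distrib)
lemma bil_diff_left: "bil M (u - w) v = bil M u v - bil M w v"
  unfolding bil_def by (simp add: inner_diff_left)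
lemma bil_diff_right: "bil M u (v - w) = bil M u v - bil M u w"
  unfolding bil_def by (simp add: inner_diff_right matrix_vector_mult_diff_distrib)
lemma bil_scale_left: "bil M (c *\<^sub>R u) v = c * bil M u v"
  unfolding bil_def by simp
lemma bil_scale_right: "bil M u (c *\<^sub>R v) = c * bil M u v"
  unfolding bil_def by (simp add: matrix_vector_mult_scaleR)
lemma bil_neg_left: "bil M (- u) v = - bil M u v"
  unfolding bil_def by simp
lemma bil_neg_right: "bil M u (- v) = - bil M u v"
  using bil_diff_right[of M u 0 v] by (simp add: bil_def)
lemma bil_zero_left[simp]: "bil M 0 v = 0"
  unfolding bil_def by simp
lemma bil_zero_right[simp]: "bil M u 0 = 0"
  unfolding bil_def by simp
lemma bil_sum_left: "bil M (\<Sum>x\<in>S. c x *\<^sub>R f x) v = (\<Sum>x\<in>S. c x * bil M (f x) v)"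
  unfolding bil_def by (simp add: inner_sum_left)
lemma bil_mult: "bil (A ** B) u v = bil A u (B *v v)"
  unfolding bil_def by (simp add: matrix_vector_mul_assoc)

lemmas bil_lin = bil_add_left bil_add_right bil_diff_left bil_diff_right bil_scale_left
  bil_scale_right bil_neg_left bil_neg_right

lemma mneg_l: "(- A) ** (B::'a::comm_ring_1^'n^'n) = - (A ** B)"
  by (simp add: vec_eq_iff matrix_matrix_mult_def sum_negf)
lemma mneg_r: "A ** (- (B::'a::comm_ring_1^'n^'n)) = - (A ** B)"
  by (simp add: vec_eq_iff matrix_matrix_mult_def sum_negf)
lemma madd_r: "(A + B) ** (C::'a::comm_ring_1^'n^'n) = A ** C + B ** C"
  by (simp add: vec_eq_iff matrix_matrix_mult_def sum.distrib distrib_right)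
lemma mdiff_r: "(A - B) ** (C::'a::comm_ring_1^'n^'n) = A ** C - B ** C"
  by (simp add: vec_eq_iff matrix_matrix_mult_def sum_subtractf left_diff_distrib)
lemma mdiff_l: "C ** (A - B) = C ** A - C ** (B::'a::comm_ring_1^'n^'n)"
  by (simp add: vec_eq_iff matrix_matrix_mult_def sum_subtractf right_diff_distrib)
lemma transpose_neg: "transpose (- A) = - transpose A"
  by (simp add: vec_eq_iff transpose_def)
lemma transpose_add: "transpose (A + B) = transpose A + transpose B"
  by (simp add: vec_eq_iff transpose_def)
lemma transpose_scaleR: "transpose (c *\<^sub>R A) = c *\<^sub>R transpose (A::mat4)"
  by (simp add: vec_eq_iff transpose_def)
lemma mat_neg_vec: "(- A) *v x = - (A *v (x::real^'n))"
  by (simp add: vec_eq_iff matrix_vector_mult_def sum_negf)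


lemma smat_vec: "(c *\<^sub>R A) *v x = c *\<^sub>R (A *v (x::real^'n))"
  by (simp add: vec_eq_iff matrix_vector_mult_def sum_distrib_left mult_ac)

lemma orth_indep:
  fixes g :: mat4 and S :: "(real^4) set"
  assumes "finite S" "\<forall>v\<in>S. bil g v v > 0" "\<forall>v\<in>S. \<forall>w\<in>S. v \<noteq> w \<longrightarrow> bil g v w = 0"
  shows "independent S"
proof
  assume "dependent S"
  then obtain u v0 where v0: "v0 \<in> S" "u v0 \<noteq> 0" and s: "(\<Sum>v\<in>S. u v *\<^sub>R v) = 0"
    using real_vector.dependent_finite[OF assms(1)] by blast
  have "0 = bil g (\<Sum>v\<in>S. u v *\<^sub>R v) v0" using s by simp
  also have "\<dots> = (\<Sum>v\<in>S. u v * bil g v v0)" by (rule bil_sum_left)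
  also have "\<dots> = u v0 * bil g v0 v0"
    using assms(3) v0(1) by (subst sum.remove[OF assms(1) v0(1)]) (auto intro!: sum.neutral)
  finally have "u v0 * bil g v0 v0 = 0" by simp
  moreover have "bil g v0 v0 > 0" using assms(2) v0(1) by blast
  ultimately show False using v0(2) by simp
qed

lemma span4:
  fixes g :: mat4 and b1 b2 b3 b4 x :: "real^4"
  assumes gsym: "transpose g = g" and gpos: "\<forall>u. u \<noteq> 0 \<longrightarrow> bil g u u > 0"
    and n: "bil g b1 b1 = 1" "bil g b2 b2 = 1" "bil g b3 b3 = 1" "bil g b4 b4 = 1"
    and o: "bil g b1 b2 = 0" "bil g b1 b3 = 0" "bil g b1 b4 = 0" "bil g b2 b3 = 0"
      "bil g b2 b4 = 0" "bil g b3 b4 = 0"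
  shows "x = bil g x b1 *\<^sub>R b1 + bil g x b2 *\<^sub>R b2 + bil g x b3 *\<^sub>R b3 + bil g x b4 *\<^sub>R b4"
proof (rule ccontr)
  have sym: "bil g u v = bil g v u" for u v using bil_transpose[of g u v] gsym by simp
  define y where "y = x - (bil g x b1 *\<^sub>R b1 + bil g x b2 *\<^sub>R b2 + bil g x b3 *\<^sub>R b3 + bil g x b4 *\<^sub>R b4)"
  assume "\<not> ?thesis"
  then have y0: "y \<noteq> 0" unfolding y_def by simp
  have o': "bil g b2 b1 = 0" "bil g b3 b1 = 0" "bil g b4 b1 = 0" "bil g b3 b2 = 0"
      "bil g b4 b2 = 0" "bil g b4 b3 = 0" using o sym by metis+
  have yb: "bil g y b1 = 0" "bil g y b2 = 0" "bil g y b3 = 0" "bil g y b4 = 0"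
    unfolding y_def by (simp_all add: bil_lin n o o')
  have by': "bil g b1 y = 0" "bil g b2 y = 0" "bil g b3 y = 0" "bil g b4 y = 0"
    using yb sym by metis+
  have yy: "bil g y y > 0" using gpos y0 by simp
  let ?S = "{b1, b2, b3, b4, y}"
  have ind: "independent ?S"
    by (rule orth_indep) (use n o o' yb by' yy in auto)
  have d: "b1 \<noteq> b2" "b1 \<noteq> b3" "b1 \<noteq> b4" "b2 \<noteq> b3" "b2 \<noteq> b4" "b3 \<noteq> b4"
      "b1 \<noteq> y" "b2 \<noteq> y" "b3 \<noteq> y" "b4 \<noteq> y"
    using n o yb by auto
  have "card ?S = 5" using d by simp
  moreover have "card ?S \<le> DIM(real^4)" using independent_bound[OF ind] by simp
  ultimately show False by simp
qed


lemma quad: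
  fixes g M J :: mat4
  assumes gsym: "transpose g = g" and gpos: "\<forall>u. u \<noteq> 0 \<longrightarrow> bil g u u > 0"
    and JJ: "J ** J = - mat 1" and gJ: "transpose J ** g ** J = g"
    and MJ: "M ** J = J ** M" and gMsym: "transpose (g ** M) = g ** M"
    and Mpos: "\<forall>u. u \<noteq> 0 \<longrightarrow> bil (g ** M) u u > 0"
  shows "\<exists>s p. s > 0 \<and> M ** M = s *\<^sub>R M - p *\<^sub>R mat 1"
proof -
  define ip where "ip u v = bil g u v" for u v
  have sym: "ip u v = ip v u" for u v using bil_transpose[of g u v] gsym by (simp add: ip_def)
  have ip_lin: "ip (u + w) v = ip u v + ip w v" "ip u (v + w) = ip u v + ip u w"
    "ip (u - w) v = ip u v - ip w v" "ip u (v - w) = ip u v - ip u w"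
    "ip (c *\<^sub>R u) v = c * ip u v" "ip u (c *\<^sub>R v) = c * ip u v"
    "ip (- u) v = - ip u v" "ip u (- v) = - ip u v" for u v w c
    by (simp_all add: ip_def bil_lin)
  have ipJ: "ip (J *v u) (J *v v) = ip u v" for u v unfolding ip_def bil_mv gJ ..
  have JJv: "J *v (J *v u) = - u" for u by (simp add: matrix_vector_mul_assoc JJ mat_neg_vec)
  have ipJ2: "ip u (J *v v) = - ip (J *v u) v" for u v
  proof -
    have "ip u (J *v v) = ip (J *v u) (J *v (J *v v))" by (simp add: ipJ)
    also have "\<dots> = - ip (J *v u) v" by (simp add: JJv ip_lin)
    finally show ?thesis .
  qed
  have ipJ0: "ip u (J *v u) = 0" for u using ipJ2[of u u] sym[of u "J *v u"] by simp
  have MJv: "M *v (J *v u) = J *v (M *v u)" for u by (simp add: matrix_vector_mul_assoc MJ)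
  have Msa: "ip (M *v u) v = ip u (M *v v)" for u v
  proof -
    have "ip u (M *v v) = bil (g ** M) u v" by (simp add: ip_def bil_mult)
    moreover have "ip (M *v u) v = bil (g ** M) u v"
    proof -
      have "ip (M *v u) v = ip v (M *v u)" by (rule sym)
      also have "\<dots> = bil (g ** M) v u" by (simp add: ip_def bil_mult)
      also have "\<dots> = bil (g ** M) u v" using bil_transpose[of "g ** M" v u] gMsym by simp
      finally show ?thesis .
    qed
    ultimately show ?thesis by simp
  qed
  have Mpos': "ip (M *v u) u > 0" if "u \<noteq> 0" for u
  proof -
    have "ip (M *v u) u = ip u (M *v u)" by (rule Msa)
    thus ?thesis using Mpos that by (simp add: ip_def bil_mult)
  qed
  have ipMJ0: "ip (M *v u) (J *v u) = 0" for u
  proof -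
    have "ip (M *v u) (J *v u) = ip u (J *v (M *v u))" by (simp add: Msa MJv)
    also have "\<dots> = - ip (J *v u) (M *v u)" by (rule ipJ2)
    also have "\<dots> = - ip (M *v u) (J *v u)" by (simp add: sym)
    finally show ?thesis by simp
  qed
  define nz where "nz v = (1 / sqrt (ip v v)) *\<^sub>R v" for v
  have nz1: "ip (nz v) (nz v) = 1" if "v \<noteq> 0" for v
  proof -
    have q: "ip v v > 0" using gpos that by (simp add: ip_def)
    have "ip (nz v) (nz v) = (1 / sqrt (ip v v)) * (1 / sqrt (ip v v)) * ip v v"
      by (simp add: nz_def ip_lin)
    also have "\<dots> = 1" using q by (simp add: field_simps)
    finally show ?thesis .
  qed
  define x0 :: "real^4" where "x0 = axis 1 1"
  have x00: "x0 \<noteq> 0" by (simp add: x0_def axis_eq_0_iff)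
  define e1 where "e1 = nz x0"
  define f1 where "f1 = J *v e1"
  have e1e1: "ip e1 e1 = 1" using nz1[OF x00] by (simp add: e1_def)
  have f1f1: "ip f1 f1 = 1" using e1e1 by (simp add: f1_def ipJ)
  have e1f1: "ip e1 f1 = 0" by (simp add: f1_def ipJ0)
  have "\<not> UNIV \<subseteq> span {e1, f1}"
  proof
    assume "UNIV \<subseteq> span {e1, f1}"
    then have "dim (UNIV :: (real^4) set) \<le> card {e1, f1}" by (rule dim_le_card) simp
    also have "\<dots> \<le> 2" by (simp add: card_insert_le_m1)
    finally show False by simp
  qed
  then obtain w where w: "w \<notin> span {e1, f1}" by blast
  define r where "r = w - ip w e1 *\<^sub>R e1 - ip w f1 *\<^sub>R f1"
  have r0: "r \<noteq> 0"
  proof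
    assume "r = 0"
    then have "w = ip w e1 *\<^sub>R e1 + ip w f1 *\<^sub>R f1" by (simp add: r_def algebra_simps)
    also have "\<dots> \<in> span {e1, f1}"
      by (intro span_add span_scale span_base) auto
    finally show False using w by simp
  qed
  have re1: "ip r e1 = 0" by (simp add: r_def ip_lin e1e1 sym[of f1 e1] e1f1)
  have rf1: "ip r f1 = 0" by (simp add: r_def ip_lin f1f1 e1f1)
  define e2 where "e2 = nz r"
  define f2 where "f2 = J *v e2"
  have e2e2: "ip e2 e2 = 1" using nz1[OF r0] by (simp add: e2_def)
  have e2e1: "ip e2 e1 = 0" by (simp add: e2_def nz_def ip_lin re1)
  have e2f1: "ip e2 f1 = 0" by (simp add: e2_def nz_def ip_lin rf1)
  have f2f2: "ip f2 f2 = 1" using e2e2 by (simp add: f2_def ipJ)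
  have e2f2: "ip e2 f2 = 0" by (simp add: f2_def ipJ0)
  have f2f1: "ip f2 f1 = 0" using e2e1 by (simp add: f2_def f1_def ipJ)
  have f2e1: "ip f2 e1 = 0"
  proof -
    have "ip f2 e1 = ip e1 (J *v e2)" by (simp add: f2_def sym)
    also have "\<dots> = - ip f1 e2" by (simp add: ipJ2 f1_def)
    finally show ?thesis using e2f1 sym by simp
  qed
  have sp: "x = ip x e1 *\<^sub>R e1 + ip x f1 *\<^sub>R f1 + ip x e2 *\<^sub>R e2 + ip x f2 *\<^sub>R f2" for x
    unfolding ip_def
    by (rule span4[OF gsym gpos]) (use e1e1 f1f1 e2e2 f2f2 e1f1 e2e1 e2f1 e2f2 f2f1 f2e1 sym in \<open>simp_all add: ip_def\<close>)
  define a where "a = ip (M *v e1) e1"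
  define b where "b = ip (M *v e2) e2"
  define c where "c = ip (M *v e1) e2"
  define d where "d = ip (M *v e1) f2"
  have Jf1: "J *v f1 = - e1" by (simp add: f1_def JJv)
  have Jf2: "J *v f2 = - e2" by (simp add: f2_def JJv)
  have Me1: "M *v e1 = a *\<^sub>R e1 + c *\<^sub>R e2 + d *\<^sub>R f2"
    using sp[of "M *v e1"] ipMJ0[of e1] by (simp add: a_def c_def d_def f1_def)
  have Me2: "M *v e2 = c *\<^sub>R e1 - d *\<^sub>R f1 + b *\<^sub>R e2"
  proof -
    have 1: "ip (M *v e2) e1 = c" using Msa[of e2 e1] sym[of e2 "M *v e1"] by (simp add: c_def)
    have "ip (M *v e2) f1 = ip e2 (J *v (M *v e1))" by (simp add: Msa f1_def MJv)
    also have "\<dots> = - d" by (simp add: ipJ2 f2_def[symmetric] d_def sym)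
    finally have 2: "ip (M *v e2) f1 = - d" .
    have 3: "ip (M *v e2) f2 = 0" by (simp add: f2_def ipMJ0)
    show ?thesis using sp[of "M *v e2"] 1 2 3 by (simp add: b_def)
  qed
  have Je1: "J *v e1 = f1" by (simp add: f1_def)
  have Je2: "J *v e2 = f2" by (simp add: f2_def)
  have Mf1: "M *v f1 = a *\<^sub>R f1 + c *\<^sub>R f2 - d *\<^sub>R e2"
  proof -
    have "M *v f1 = J *v (M *v e1)" by (simp add: MJv flip: Je1)
    also have "\<dots> = a *\<^sub>R f1 + c *\<^sub>R f2 - d *\<^sub>R e2"
      unfolding Me1 by (simp add: matrix_vector_right_distrib matrix_vector_mult_scaleR Je1 Je2 Jf2)
    finally show ?thesis .
  qed
  have Mf2: "M *v f2 = c *\<^sub>R f1 + d *\<^sub>R e1 + b *\<^sub>R f2"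
  proof -
    have "M *v f2 = J *v (M *v e2)" by (simp add: MJv flip: Je2)
    also have "\<dots> = c *\<^sub>R f1 + d *\<^sub>R e1 + b *\<^sub>R f2"
      unfolding Me2 by (simp add: matrix_vector_right_distrib matrix_vector_mult_diff_distrib matrix_vector_mult_scaleR Je1 Je2 Jf1)
    finally show ?thesis .
  qed
  define p where "p = a * b - c * c - d * d"
  define K where "K = M ** M - (a + b) *\<^sub>R M + p *\<^sub>R mat 1"
  have Kv: "K *v v = M *v (M *v v) - (a + b) *\<^sub>R (M *v v) + p *\<^sub>R v" for v
    by (simp add: K_def matrix_vector_mult_add_rdistrib matrix_vector_mult_diff_rdistrib smat_vec matrix_vector_mul_assoc)
  have KJ: "K *v (J *v v) = J *v (K *v v)" for v
    by (simp add: Kv MJv matrix_vector_right_distrib matrix_vector_mult_diff_distrib matrix_vector_mult_scaleR)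
  have Ke1: "K *v e1 = 0"
    unfolding Kv Me1
    by (simp add: matrix_vector_right_distrib matrix_vector_mult_scaleR Me1 Me2 Mf2 p_def algebra_simps)
  have Ke2: "K *v e2 = 0"
    unfolding Kv Me2
    by (simp add: matrix_vector_right_distrib matrix_vector_mult_diff_distrib matrix_vector_mult_scaleR Me1 Mf1 Me2 p_def algebra_simps)
  have Kf1: "K *v f1 = 0" by (simp add: f1_def KJ Ke1)
  have Kf2: "K *v f2 = 0" by (simp add: f2_def KJ Ke2)
  have "K = 0"
  proof (rule iffD2[OF matrix_eq], rule allI)
    fix x
    have "K *v x = K *v (ip x e1 *\<^sub>R e1 + ip x f1 *\<^sub>R f1 + ip x e2 *\<^sub>R e2 + ip x f2 *\<^sub>R f2)"
      using sp[of x] by simp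
    also have "\<dots> = 0"
      by (simp add: matrix_vector_right_distrib matrix_vector_mult_scaleR Ke1 Ke2 Kf1 Kf2)
    finally show "K *v x = 0 *v x" by simp
  qed
  then have "M ** M = (a + b) *\<^sub>R M - p *\<^sub>R mat 1"
    unfolding K_def by (simp add: algebra_simps eq_neg_iff_add_eq_0)
  moreover have "a + b > 0"
  proof -
    have "e1 \<noteq> 0" using e1e1 by (auto simp: ip_def)
    moreover have "e2 \<noteq> 0" using e2e2 by (auto simp: ip_def)
    ultimately show ?thesis using Mpos' unfolding a_def b_def by (simp add: add_pos_pos)
  qed
  ultimately show ?thesis by blast
qed


section \<open>Rationality\<close>

lemma rat_mat_mult: "rat_mat A \<Longrightarrow> rat_mat B \<Longrightarrow> rat_mat (A ** B)"
  unfolding rat_mat_def matrix_matrix_mult_def by (auto intro!: Rats_sum Rats_mult)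
lemma rat_mat_neg: "rat_mat A \<Longrightarrow> rat_mat (- A)"
  unfolding rat_mat_def by simp
lemma rat_mat_add: "rat_mat A \<Longrightarrow> rat_mat B \<Longrightarrow> rat_mat (A + B)"
  unfolding rat_mat_def by simp
lemma rat_mat_diff: "rat_mat A \<Longrightarrow> rat_mat B \<Longrightarrow> rat_mat (A - B)"
  unfolding rat_mat_def by simp
lemma rat_mat_transpose: "rat_mat A \<Longrightarrow> rat_mat (transpose A)"
  unfolding rat_mat_def transpose_def by simp
lemma rat_mat_scale: "rat_mat A \<Longrightarrow> c \<in> \<rat> \<Longrightarrow> rat_mat (c *\<^sub>R A)"
  unfolding rat_mat_def by simp
lemma int_rat_mat: "int_mat A \<Longrightarrow> rat_mat A"
  unfolding int_mat_def rat_mat_def using Ints_subset_Rats by blast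

lemma rat_det: "(\<forall>i j. (A::real^'n^'n) $ i $ j \<in> \<rat>) \<Longrightarrow> det A \<in> \<rat>"
  unfolding det_def by (auto intro!: Rats_sum Rats_mult Rats_prod)

lemma rat_inv:
  assumes A: "rat_mat A" and AB: "A ** B = mat 1"
  shows "rat_mat B"
proof -
  have "invertible A" using AB matrix_left_right_inverse unfolding invertible_def by blast
  then have d0: "det A \<noteq> 0" by (simp add: invertible_det_nz)
  have "B $ k $ j \<in> \<rat>" for k j
  proof -
    define x where "x = column j B"
    define b :: "real^4" where "b = axis j 1"
    have "A *v x = b"
    proof -
      have "A *v x = A *v (B *v axis j 1)"
        by (simp add: x_def vec_eq_iff matrix_vector_mult_def column_def axis_def mult_delta_right)
      also have "\<dots> = b" by (simp add: matrix_vector_mul_assoc AB b_def)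
      finally show ?thesis .
    qed
    then have "x = (\<chi> k. det(\<chi> i j. if j=k then b$i else A$i$j) / det A)"
      using cramer[OF d0] by blast
    then have "x $ k = det(\<chi> i j. if j=k then b$i else A$i$j) / det A" by simp
    moreover have "det(\<chi> i j. if j=k then b$i else A$i$j) \<in> \<rat>"
      by (rule rat_det) (use A in \<open>auto simp: rat_mat_def b_def axis_def\<close>)
    moreover have "det A \<in> \<rat>" using A by (intro rat_det) (simp add: rat_mat_def)
    ultimately have "x $ k \<in> \<rat>" by simp
    then show ?thesis by (simp add: x_def column_def)
  qed
  then show ?thesis by (simp add: rat_mat_def)
qed

lemma inv_swap:
  assumes II: "I ** I = - mat 1" and X: "transpose I ** X ** I = X"
  shows "X ** I = - (transpose I ** (X::mat4))"
proof -
  have "X ** I = (transpose I ** X ** I) ** I" using X by simp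
  also have "\<dots> = (transpose I ** X) ** (I ** I)" by (simp add: matrix_mul_assoc)
  also have "\<dots> = - (transpose I ** X)" by (simp add: II mneg_r)
  finally show ?thesis .
qed

lemma bil_inv_mat: "(\<forall>u v. bil A (I *v u) (I *v v) = bil A u v) \<longleftrightarrow> transpose I ** A ** I = A"
  by (metis bil_ext bil_mv)

lemma kaehler_eq: "kaehler_form G I = transpose I ** G"
  by (simp add: kaehler_form_def vec_eq_iff matrix_matrix_mult_def transpose_def)

lemma part1:
  fixes G I :: mat4
  assumes met: "is_metric G" and Grat: "rat_mat G"
    and cs: "is_complex_structure I" and pol: "polarizable I" and comp: "compatible G I"
  shows "kaehler_form G I \<in> span (calH2 I)"
proof -
  have II: "I ** I = - mat 1" using cs by (simp add: is_complex_structure_def)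
  have GI: "transpose I ** G ** I = G" using comp bil_inv_mat by (simp add: compatible_def)
  have Gsym: "transpose G = G" using met by (simp add: is_metric_def)
  obtain P where PZ: "P \<in> H2Z" and PH: "P \<in> H11R I"
    and Psym: "\<forall>u v. bil P (I *v u) v = bil P (I *v v) u"
    and Ppos: "\<forall>u. u \<noteq> 0 \<longrightarrow> bil P (I *v u) u > 0"
    using pol unfolding polarizable_def by blast
  have PI: "transpose I ** P ** I = P" using PH bil_inv_mat by (simp add: H11R_def)
  have Pa: "transpose P = - P" using PZ by (simp add: H2Z_def antisym_mat_def)
  have Prat: "rat_mat P" using PZ by (simp add: H2Z_def int_rat_mat)
  define g where "g = transpose I ** P"
  have gb: "bil g u v = bil P (I *v u) v" for u v by (simp add: g_def bil_mv1)
  have gsym: "transpose g = g"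
    by (rule bil_ext) (metis bil_transpose gb Psym)
  have gpos: "\<forall>u. u \<noteq> 0 \<longrightarrow> bil g u u > 0" using Ppos gb by simp
  have gI: "g ** I = P" using PI by (simp add: g_def)
  have gJ: "transpose I ** g ** I = g"
    by (simp add: g_def matrix_mul_assoc[symmetric] PI) (simp add: matrix_mul_assoc PI)
  have "inj ((*v) g)"
  proof (unfold vec.inj_iff_eq_0, intro allI impI)
    fix x assume "g *v x = 0"
    then have "bil g x x = 0" by (simp add: bil_def)
    then show "x = 0" using gpos by force
  qed
  then obtain gi where gig: "gi ** g = mat 1" using matrix_left_invertible_injective by blast
  then have ggi: "g ** gi = mat 1" using matrix_left_right_inverse by blast
  define M where "M = gi ** G"
  have gM: "g ** M = G" by (simp add: M_def matrix_mul_assoc ggi)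
  have MI: "M ** I = I ** M"
  proof -
    have "g ** (M ** I) = - (transpose I ** G)"
      by (simp add: matrix_mul_assoc gM inv_swap[OF II GI])
    moreover have "g ** (I ** M) = - (transpose I ** G)"
      by (simp add: matrix_mul_assoc inv_swap[OF II gJ] mneg_l flip: gM)
    ultimately have "g ** (M ** I) = g ** (I ** M)" by simp
    then have "gi ** (g ** (M ** I)) = gi ** (g ** (I ** M))" by simp
    then show ?thesis by (simp add: matrix_mul_assoc gig)
  qed
  have gMsym: "transpose (g ** M) = g ** M" using gM Gsym by simp
  have Mpos: "\<forall>u. u \<noteq> 0 \<longrightarrow> bil (g ** M) u u > 0" using gM met by (simp add: is_metric_def)
  obtain s p where s0: "s > 0" and MM: "M ** M = s *\<^sub>R M - p *\<^sub>R mat 1"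
    using quad[OF gsym gpos II gJ MI gMsym Mpos] by blast
  have ItIt: "transpose I ** transpose I = - mat 1"
    using II by (metis matrix_transpose_mul transpose_mat transpose_neg)
  have om: "kaehler_form G I = - (P ** M)"
  proof -
    have "kaehler_form G I = transpose I ** (g ** M)" by (simp add: kaehler_eq gM)
    also have "\<dots> = (transpose I ** transpose I) ** P ** M" by (simp add: g_def matrix_mul_assoc)
    also have "\<dots> = - (P ** M)" by (simp add: ItIt mneg_l)
    finally show ?thesis .
  qed
  define X where "X = P ** M ** M"
  have X2: "X = s *\<^sub>R (P ** M) - p *\<^sub>R P"
    by (simp add: X_def matrix_mul_assoc[symmetric] MM mdiff_l matrix_scalar_ac scalar_matrix_assoc)
  have om2: "kaehler_form G I = (- 1 / s) *\<^sub>R X - (p / s) *\<^sub>R P"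
    using s0 by (simp add: om X2 algebra_simps)
  define Pi where "Pi = - (I ** gi)"
  have PIg: "P ** I = - g"
    by (simp add: flip: gI) (simp add: matrix_mul_assoc[symmetric] II mneg_r)
  have PPi: "P ** Pi = mat 1"
    by (simp add: Pi_def mneg_r matrix_mul_assoc PIg mneg_l ggi)
  have Pirat: "rat_mat Pi" by (rule rat_inv[OF Prat PPi])
  have PiP: "Pi ** P = mat 1" using PPi matrix_left_right_inverse by blast
  have gPi: "g ** Pi = transpose I" by (simp add: g_def matrix_mul_assoc[symmetric] PPi)
  have Igi: "I ** Pi = gi"
    by (simp add: Pi_def mneg_r matrix_mul_assoc II mneg_l)
  have MX: "M = I ** Pi ** G" by (simp add: M_def Igi)
  have Xf: "X = - (G ** Pi ** G)"
  proof -
    have "X = (P ** I ** Pi) ** G ** (I ** Pi ** G)"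
      by (simp add: X_def MX matrix_mul_assoc)
    also have "\<dots> = - (transpose I ** G ** I ** Pi ** G)"
      by (simp add: PIg mneg_l gPi matrix_mul_assoc)
    also have "\<dots> = - (G ** Pi ** G)"
      by (simp add: GI flip: matrix_mul_assoc) (simp add: matrix_mul_assoc GI)
    finally show ?thesis .
  qed
  have Pit: "transpose Pi = - Pi"
  proof -
    have "transpose Pi ** transpose P = mat 1"
      using PPi by (metis matrix_transpose_mul transpose_mat)
    then have 1: "(- transpose Pi) ** P = mat 1" by (simp add: Pa mneg_r mneg_l)
    have "- transpose Pi = (- transpose Pi) ** (P ** Pi)" by (simp add: PPi)
    also have "\<dots> = Pi" by (simp add: matrix_mul_assoc 1)
    finally show ?thesis by (metis minus_minus)
  qed
  have Xrat: "rat_mat X" unfolding Xf by (intro rat_mat_neg rat_mat_mult Grat Pirat)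
  have Xa: "transpose X = - X"
    unfolding Xf by (simp add: transpose_neg matrix_transpose_mul Gsym Pit mneg_l mneg_r matrix_mul_assoc)
  have XI: "transpose I ** X ** I = X"
  proof -
    have MMI: "M ** M ** I = I ** M ** M" by (simp add: matrix_mul_assoc[symmetric] MI) (simp add: matrix_mul_assoc MI)
    have "transpose I ** X ** I = transpose I ** P ** (M ** M ** I)" by (simp add: X_def matrix_mul_assoc)
    also have "\<dots> = (transpose I ** P ** I) ** M ** M" by (simp add: MMI matrix_mul_assoc)
    also have "\<dots> = X" by (simp add: PI X_def)
    finally show ?thesis .
  qed
  have XH: "X \<in> calH2 I"
    using Xrat Xa XI bil_inv_mat[of X I] by (simp add: calH2_def H2Q_def H11R_def antisym_mat_def)
  have PH2: "P \<in> calH2 I"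
    using Prat PH Pa by (simp add: calH2_def H2Q_def H11R_def antisym_mat_def)
  show ?thesis unfolding om2
    by (intro span_diff span_scale span_base XH PH2)
qed



definition cv :: "complex^'n \<Rightarrow> complex^'n" where "cv x = (\<chi> i. cnj (x $ i))"

lemma cv_vm: "cv (x v* cmat A) = cv x v* cmat A"
  by (simp add: cv_def vec_eq_iff vector_matrix_mult_def cmat_def cnj_sum)
lemma cv_scale: "cv (z *s x) = cnj z *s cv x"
  by (simp add: cv_def vec_eq_iff)
lemma cv_add: "cv (x + y) = cv x + cv y"
  by (simp add: cv_def vec_eq_iff)
lemma cv_cv[simp]: "cv (cv x) = x"
  by (simp add: cv_def vec_eq_iff)
lemma cv_0[simp]: "cv 0 = 0"
  by (simp add: cv_def vec_eq_iff)
lemma cv_eq0: "cv x = 0 \<longleftrightarrow> x = 0"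
  by (metis cv_0 cv_cv)

lemma cmat_mult: "cmat (A ** B) = cmat A ** cmat B"
  by (simp add: cmat_def vec_eq_iff matrix_matrix_mult_def)
lemma cmat_neg: "cmat (- A) = - cmat A"
  by (simp add: cmat_def vec_eq_iff)
lemma cmat_mat1: "cmat (mat 1) = mat 1"
  by (simp add: cmat_def vec_eq_iff mat_def)
lemma cmat_inj: "cmat A = cmat B \<Longrightarrow> A = B"
  by (simp add: cmat_def vec_eq_iff)

lemma vm_neg: "x v* (- A) = - (x v* (A::complex^'n^'m))"
  by (simp add: vec_eq_iff vector_matrix_mult_def sum_negf)
lemma vm_sum: "(\<Sum>k\<in>S. f k) v* (A::complex^'n^'m) = (\<Sum>k\<in>S. f k v* A)"
  by (induction S rule: infinite_finite_induct) (simp_all add: vector_matrix_left_distrib)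

lemma axis_vm: "axis i 1 v* (A::complex^'n^'m) = A $ i"
  by (simp add: vec_eq_iff vector_matrix_mult_def axis_def mult_delta_right mult_delta_left)
lemma row_ext: "(\<And>x. x v* A = x v* (B::complex^'n^'m)) \<Longrightarrow> A = B"
  by (metis axis_vm vec_eq_iff)

definition csm :: "complex \<Rightarrow> complex^'n^'m \<Rightarrow> complex^'n^'m" where
  "csm z M = (\<chi> a b. z * M $ a $ b)"

lemma vm_csum: "x v* (\<chi> a b. \<Sum>j\<in>S. c j * (M j :: complex^'n^'m) $ a $ b) = (\<Sum>j\<in>S. c j *s (x v* M j))"
  unfolding vector_matrix_mult_def
  by (simp add: vec_eq_iff sum_distrib_left sum_distrib_right mult_ac sum_component) (subst sum.swap, simp add: mult_ac)

section \<open>Generated subfield\<close>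

definition subf :: "complex set \<Rightarrow> bool" where
  "subf K \<longleftrightarrow> 0 \<in> K \<and> 1 \<in> K \<and>
      (\<forall>x\<in>K. \<forall>y\<in>K. x + y \<in> K \<and> x * y \<in> K) \<and> (\<forall>x\<in>K. - x \<in> K) \<and>
      (\<forall>x\<in>K. x \<noteq> 0 \<longrightarrow> inverse x \<in> K)"

lemma gen_subfield_subf: "subf (gen_subfield S)"
  unfolding subf_def gen_subfield_def by blast
lemma gen_subfield_sup: "S \<subseteq> gen_subfield S"
  unfolding gen_subfield_def by blast

lemma subf_add: "subf K \<Longrightarrow> x \<in> K \<Longrightarrow> y \<in> K \<Longrightarrow> x + y \<in> K" by (simp add: subf_def)
lemma subf_mult: "subf K \<Longrightarrow> x \<in> K \<Longrightarrow> y \<in> K \<Longrightarrow> x * y \<in> K" by (simp add: subf_def)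
lemma subf_neg: "subf K \<Longrightarrow> x \<in> K \<Longrightarrow> - x \<in> K" by (simp add: subf_def)
lemma subf_diff: "subf K \<Longrightarrow> x \<in> K \<Longrightarrow> y \<in> K \<Longrightarrow> x - y \<in> K"
  using subf_add subf_neg by (metis diff_conv_add_uminus)
lemma subf_inv: "subf K \<Longrightarrow> x \<in> K \<Longrightarrow> inverse x \<in> K"
  by (cases "x = 0") (auto simp: subf_def)
lemma subf_div: "subf K \<Longrightarrow> x \<in> K \<Longrightarrow> y \<in> K \<Longrightarrow> x / y \<in> K"
  by (simp add: divide_inverse subf_mult subf_inv)
lemma subf_0: "subf K \<Longrightarrow> 0 \<in> K" by (simp add: subf_def)
lemma subf_1: "subf K \<Longrightarrow> 1 \<in> K" by (simp add: subf_def)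

lemma subf_of_nat: "subf K \<Longrightarrow> of_nat n \<in> K"
  by (induction n) (auto intro: subf_add subf_0 subf_1)
lemma subf_of_int: "subf K \<Longrightarrow> of_int n \<in> K"
proof (cases "0 \<le> n")
  case True
  then have "(of_int n :: complex) = of_nat (nat n)" by simp
  then show "subf K \<Longrightarrow> of_int n \<in> K" using subf_of_nat by metis
next
  case False
  then have "(of_int n :: complex) = - of_nat (nat (- n))" by simp
  then show "subf K \<Longrightarrow> of_int n \<in> K" using subf_of_nat subf_neg by metis
qed
lemma of_real_of_rat': "complex_of_real (of_rat q) = of_rat q"
  by (cases q) (simp add: of_rat_rat)
lemma subf_of_rat: "subf K \<Longrightarrow> (of_rat q :: complex) \<in> K"
  by (cases q) (auto simp: of_rat_rat intro!: subf_div subf_of_int)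
lemma subf_Rats: "subf K \<Longrightarrow> (x::complex) \<in> \<rat> \<Longrightarrow> x \<in> K"
  by (auto elim!: Rats_cases intro: subf_of_rat)
lemma subf_real_rat: "subf K \<Longrightarrow> (r::real) \<in> \<rat> \<Longrightarrow> complex_of_real r \<in> K"
  by (auto elim!: Rats_cases intro: subf_of_rat simp: of_real_of_rat')

lemma subf_sum: "subf K \<Longrightarrow> (\<And>x. x \<in> S \<Longrightarrow> f x \<in> K) \<Longrightarrow> sum f S \<in> K"
  by (induction S rule: infinite_finite_induct) (auto intro: subf_add subf_0)
lemma subf_prod: "subf K \<Longrightarrow> (\<And>x. x \<in> S \<Longrightarrow> f x \<in> K) \<Longrightarrow> prod f S \<in> K"
  by (induction S rule: infinite_finite_induct) (auto intro: subf_mult subf_1)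
lemma subf_det: "subf K \<Longrightarrow> (\<And>i j. (A::complex^'n^'n) $ i $ j \<in> K) \<Longrightarrow> det A \<in> K"
  unfolding det_def by (auto intro!: subf_sum subf_mult subf_prod subf_of_int)


section \<open>Rational independence implies real independence\<close>

lemma det_of_rat: "det (\<chi> i j. (of_rat (A $ i $ j) :: real)) = of_rat (det (A::rat^'n^'n))"
  unfolding det_def by (simp add: of_rat_sum of_rat_mult of_rat_prod)

lemma real_indep:
  fixes e :: "4 \<Rightarrow> mat4" and r :: "4 \<Rightarrow> real"
  assumes rat: "\<And>i. rat_mat (e i)"
    and qind: "\<forall>c::4\<Rightarrow>rat. (\<Sum>i\<in>UNIV. of_rat (c i) *\<^sub>R e i) = 0 \<longrightarrow> (\<forall>i. c i = 0)"
    and r: "(\<Sum>i\<in>UNIV. r i *\<^sub>R e i) = 0"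
  shows "r i = 0"
proof (rule ccontr)
  assume ri: "r i \<noteq> 0"
  define H :: "real^4^4" where "H = (\<chi> i j. e i \<bullet> e j)"
  have Hrat: "H $ i $ j \<in> \<rat>" for i j
    using rat unfolding H_def rat_mat_def inner_vec_def by (auto intro!: Rats_sum Rats_mult)
  define Hq :: "rat^4^4" where "Hq = (\<chi> i j. SOME q. of_rat q = H $ i $ j)"
  have Hq: "of_rat (Hq $ i $ j) = H $ i $ j" for i j
    unfolding Hq_def using Hrat[of i j] by (auto elim!: Rats_cases intro: someI)
  have HHq: "H = (\<chi> i j. of_rat (Hq $ i $ j))" by (simp add: vec_eq_iff Hq)
  have Hr: "H *v (\<chi> j. r j) = 0"
  proof -
    have "(H *v (\<chi> j. r j)) $ k = e k \<bullet> (\<Sum>j\<in>UNIV. r j *\<^sub>R e j)" for k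
      by (simp add: H_def matrix_vector_mult_def inner_sum_right mult.commute)
    then show ?thesis using r by (simp add: vec_eq_iff)
  qed
  have "(\<chi> j. r j) \<noteq> 0" using ri by (auto simp: vec_eq_iff)
  then have "\<not> (\<exists>B. B ** H = mat 1)" using Hr matrix_left_invertible_ker by blast
  then have "\<not> invertible H" by (simp add: invertible_left_inverse)
  then have "det H = 0" by (simp add: invertible_det_nz)
  then have "det Hq = 0" using det_of_rat[of Hq] HHq by simp
  then have "\<not> invertible Hq" by (simp add: invertible_det_nz)
  then obtain c where c0: "c \<noteq> 0" and Hc: "Hq *v c = 0"
    using matrix_left_invertible_ker invertible_left_inverse by blast
  define v where "v = (\<Sum>i\<in>UNIV. of_rat (c $ i) *\<^sub>R e i)"
  have ev: "e k \<bullet> v = 0" for k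
  proof -
    have "e k \<bullet> v = (\<Sum>i\<in>UNIV. of_rat (c $ i) * H $ k $ i)"
      by (simp add: v_def inner_sum_right H_def)
    also have "\<dots> = of_rat ((Hq *v c) $ k)"
      by (simp add: matrix_vector_mult_def of_rat_sum of_rat_mult Hq mult.commute)
    also have "\<dots> = 0" by (simp add: Hc)
    finally show ?thesis .
  qed
  have "v \<bullet> v = 0"
    by (subst (1) v_def) (simp add: inner_sum_left ev)
  then have "v = 0" by simp
  then have "\<forall>i. (\<lambda>i. c $ i) i = 0" using qind unfolding v_def by blast
  then show False using c0 by (simp add: vec_eq_iff)
qed


lemma smult_cancel: "z *s x = w *s x \<Longrightarrow> x \<noteq> (0::complex^'n) \<Longrightarrow> z = w"
  by (metis (no_types, lifting) mult_cancel_right vec_eq_iff vector_smult_component zero_index)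

lemma mm_row: "(A ** B) $ i = A $ i v* (B::complex^'n^'m)"
  by (simp add: vec_eq_iff matrix_matrix_mult_def vector_matrix_mult_def mult.commute)

lemma vm_rows: "x v* (R::complex^'n^'m) = (\<Sum>k\<in>UNIV. x $ k *s R $ k)"
  by (simp add: vec_eq_iff vector_matrix_mult_def sum_component mult.commute)

lemma trace_cmat: "trace (cmat A) = complex_of_real (trace A)"
  by (simp add: trace_def cmat_def)

lemma part2:
  fixes G I :: mat4 and F :: "mat4 set" and \<phi>1 \<phi>2 :: "mat4 \<Rightarrow> complex"
  assumes met: "is_metric G" and Grat: "rat_mat G" and cs: "is_complex_structure I"
    and comp: "compatible G I" and CMA: "CM_algebra I F" and CMT: "CM_type I F \<phi>1 \<phi>2"
  shows "in_tensor (calH2 I) (reflex_field F \<phi>1 \<phi>2) (\<chi> i j. \<i> * cmat (kaehler_form G I) $ i $ j)"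
proof -
  have II: "I ** I = - mat 1" using cs by (simp add: is_complex_structure_def)
  have GI: "transpose I ** G ** I = G" using comp bil_inv_mat by (simp add: compatible_def)
  have Gsym: "transpose G = G" using met by (simp add: is_metric_def)
  obtain \<alpha>1 \<alpha>2 where a1: "\<alpha>1 \<in> H10 I" and a2: "\<alpha>2 \<in> H10 I"
    and ind: "\<forall>z w. z *s \<alpha>1 + w *s \<alpha>2 = 0 \<longrightarrow> z = 0 \<and> w = 0"
    and spanH: "\<forall>\<alpha>\<in>H10 I. \<exists>z w. \<alpha> = z *s \<alpha>1 + w *s \<alpha>2"
    and eig: "\<forall>a\<in>F. \<alpha>1 v* cmat a = \<phi>1 a *s \<alpha>1 \<and> \<alpha>2 v* cmat a = \<phi>2 a *s \<alpha>2"
    using CMT unfolding CM_type_def by (elim exE conjE) blast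
  have Fhodge: "\<forall>a\<in>F. hodge_endo I a" using CMA unfolding CM_algebra_def by (elim conjE) assumption
  have Fmul: "\<forall>a\<in>F. \<forall>b\<in>F. a + b \<in> F \<and> a ** b \<in> F" using CMA unfolding CM_algebra_def by (elim conjE) assumption
  have "\<exists>e::4 \<Rightarrow> mat4. (\<forall>i. e i \<in> F) \<and>
        (\<forall>c::4 \<Rightarrow> rat. (\<Sum>i\<in>UNIV. of_rat (c i) *\<^sub>R e i) = 0 \<longrightarrow> (\<forall>i. c i = 0)) \<and>
        (\<forall>a\<in>F. \<exists>c::4 \<Rightarrow> rat. a = (\<Sum>i\<in>UNIV. of_rat (c i) *\<^sub>R e i))"
    using CMA[unfolded CM_algebra_def, THEN conjunct2, THEN conjunct2, THEN conjunct2, THEN conjunct2, THEN conjunct2, THEN conjunct2] .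
  then obtain e where eF: "\<forall>i. e i \<in> F"
    and qind: "\<forall>c::4 \<Rightarrow> rat. (\<Sum>i\<in>UNIV. of_rat (c i) *\<^sub>R e i) = 0 \<longrightarrow> (\<forall>i. c i = 0)"
    by (elim exE conjE) simp
  have Frat: "a \<in> F \<Longrightarrow> rat_mat a" for a using Fhodge by (simp add: hodge_endo_def)
  define gm :: "4 \<Rightarrow> complex^4" where
    "gm k = (if k = 1 then \<alpha>1 else if k = 2 then \<alpha>2 else if k = 3 then cv \<alpha>1 else cv \<alpha>2)" for k
  define ch :: "4 \<Rightarrow> mat4 \<Rightarrow> complex" where
    "ch k a = (if k = 1 then \<phi>1 a else if k = 2 then \<phi>2 a else if k = 3 then cnj (\<phi>1 a) else cnj (\<phi>2 a))" for k a
  define tt :: "4 \<Rightarrow> complex" where "tt k = (if k = 1 \<or> k = 2 then 1 else -1)" for k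
  have CI: "cmat I ** cmat I = - mat 1" by (simp add: cmat_mult[symmetric] II cmat_neg cmat_mat1)
  have H10I: "x v* cmat I = \<i> *s x" if "x \<in> H10 I" for x using that by (simp add: H10_def)
  have cvH10: "cv x v* cmat I = (- \<i>) *s cv x" if "x \<in> H10 I" for x
    by (simp add: cv_vm[symmetric] H10I[OF that] cv_scale)
  have gmI: "gm k v* cmat I = (\<i> * tt k) *s gm k" for k
    using exhaust_4[of k] by (auto simp: gm_def tt_def H10I a1 a2 cvH10)
  have gmE: "gm k v* cmat a = ch k a *s gm k" if "a \<in> F" for k a
    using exhaust_4[of k] eig that by (auto simp: gm_def ch_def cv_vm[symmetric] cv_scale)
  have span: "\<exists>z. x = (\<Sum>k\<in>UNIV. z k *s gm k)" for x
  proof -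
    define y where "y = x v* cmat I"
    have yy: "y v* cmat I = - x" by (simp add: y_def vector_matrix_mul_assoc CI vm_neg)
    define x10 where "x10 = (1/2) *s (x - \<i> *s y)"
    define x01 where "x01 = (1/2) *s (x + \<i> *s y)"
    have "x10 v* cmat I = (1/2) *s (y - \<i> *s (- x))"
      by (simp add: x10_def scalar_vector_matrix_assoc vector_matrix_mult_diff_distrib yy flip: y_def)
    then have h10: "x10 \<in> H10 I" by (simp add: H10_def x10_def vec_eq_iff algebra_simps)
    have "x01 v* cmat I = (1/2) *s (y + \<i> *s (- x))"
      by (simp add: x01_def scalar_vector_matrix_assoc vector_matrix_left_distrib yy flip: y_def)
    then have "x01 v* cmat I = (- \<i>) *s x01" by (simp add: x01_def vec_eq_iff algebra_simps)
    then have h01: "cv x01 \<in> H10 I" by (simp add: H10_def cv_vm[symmetric]) (simp add: cv_def vec_eq_iff)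
    obtain z w where zw: "x10 = z *s \<alpha>1 + w *s \<alpha>2" using spanH h10 by blast
    obtain z' w' where zw': "cv x01 = z' *s \<alpha>1 + w' *s \<alpha>2" using spanH h01 by blast
    have x01e: "x01 = cnj z' *s cv \<alpha>1 + cnj w' *s cv \<alpha>2"
      by (metis cv_add cv_cv cv_scale zw')
    have "x = x10 + x01" by (simp add: x10_def x01_def vec_eq_iff algebra_simps)
    also have "\<dots> = (\<Sum>k\<in>UNIV. (if k = 1 then z else if k = 2 then w else if k = 3 then cnj z' else cnj w') *s gm k)"
      by (simp add: sum_4 gm_def zw x01e add.assoc)
    finally show ?thesis
      by (rule exI[where x="\<lambda>k. if k = 1 then z else if k = 2 then w else if k = 3 then cnj z' else cnj w'"])
  qed
  have gm_ext: "A = B" if "\<And>k. gm k v* A = gm k v* B" for A B :: "complex^4^4"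
  proof (rule row_ext)
    fix x :: "complex^4"
    obtain z where z: "x = (\<Sum>k\<in>UNIV. z k *s gm k)" using span by blast
    show "x v* A = x v* B" unfolding z by (simp add: vm_sum scalar_vector_matrix_assoc that)
  qed
  have commute: "a ** I = I ** a" if "a \<in> F" for a
  proof (rule cmat_inj)
    show "cmat (a ** I) = cmat (I ** a)"
      unfolding cmat_mult
      by (rule gm_ext) (simp add: vector_matrix_mul_assoc[symmetric] gmE[OF that] gmI scalar_vector_matrix_assoc vector_smult_assoc mult.commute)
  qed
  have a10: "\<alpha>1 \<noteq> 0" using ind by (metis add.right_neutral vector_smult_lid vector_smult_lzero zero_neq_one)
  have a20: "\<alpha>2 \<noteq> 0" using ind by (metis add.left_neutral vector_smult_lid vector_smult_lzero zero_neq_one)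
  have gm0: "gm k \<noteq> 0" for k using a10 a20 by (simp add: gm_def cv_eq0)
  have ch_mult: "ch k (a ** b) = ch k a * ch k b" if "a \<in> F" "b \<in> F" for k a b
  proof (rule smult_cancel[OF _ gm0])
    have "gm k v* cmat (a ** b) = (ch k a * ch k b) *s gm k"
      by (simp add: cmat_mult vector_matrix_mul_assoc[symmetric] gmE that scalar_vector_matrix_assoc vector_smult_assoc mult.commute)
    moreover have "gm k v* cmat (a ** b) = ch k (a ** b) *s gm k"
      using Fmul that by (simp add: gmE)
    ultimately show "ch k (a ** b) *s gm k = (ch k a * ch k b) *s gm k" by simp
  qed
  define R :: "complex^4^4" where "R = (\<chi> k. gm k)"
  define zz where "zz i = (SOME z. axis i (1::complex) = (\<Sum>k\<in>UNIV. z k *s gm k))" for i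
  have zz: "axis i 1 = (\<Sum>k\<in>UNIV. zz i k *s gm k)" for i
    unfolding zz_def using span[of "axis i 1"] by (rule someI_ex)
  define S :: "complex^4^4" where "S = (\<chi> i k. zz i k)"
  have SR: "S ** R = mat 1"
  proof -
    have "(S ** R) $ i = (mat 1 :: complex^4^4) $ i" for i
    proof -
      have "(S ** R) $ i = (\<Sum>k\<in>UNIV. zz i k *s gm k)" by (simp add: mm_row vm_rows S_def R_def)
      also have "\<dots> = axis i 1" by (simp add: zz)
      also have "\<dots> = (mat 1 :: complex^4^4) $ i" by (simp add: vec_eq_iff axis_def mat_def)
      finally show ?thesis .
    qed
    then show ?thesis by (simp add: vec_eq_iff)
  qed
  then have RS: "R ** S = mat 1" using matrix_left_right_inverse by blast
  have trace_ch: "complex_of_real (trace a) = (\<Sum>k\<in>UNIV. ch k a)" if "a \<in> F" for a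
  proof -
    define D :: "complex^4^4" where "D = (\<chi> k l. if k = l then ch k a else 0)"
    have RD: "R ** cmat a = D ** R"
    proof -
      have "(R ** cmat a) $ k = (D ** R) $ k" for k
      proof -
        have "(D ** R) $ k = (\<Sum>l\<in>UNIV. D $ k $ l *s gm l)" by (simp add: mm_row vm_rows R_def)
        also have "\<dots> = ch k a *s gm k" by (simp add: D_def if_distrib[of "\<lambda>x. x *s _"] cong: if_cong)
        finally show ?thesis by (simp add: mm_row R_def gmE that)
      qed
      then show ?thesis by (simp add: vec_eq_iff)
    qed
    have "complex_of_real (trace a) = trace (cmat a)" by (simp add: trace_cmat)
    also have "\<dots> = trace (S ** (R ** cmat a))" by (simp add: matrix_mul_assoc SR)
    also have "\<dots> = trace (S ** (D ** R))" by (simp add: RD)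
    also have "\<dots> = trace ((D ** R) ** S)" by (rule trace_mul_sym)
    also have "\<dots> = trace (D ** (R ** S))" by (simp only: matrix_mul_assoc)
    also have "\<dots> = trace D" by (simp add: RS)
    also have "\<dots> = (\<Sum>k\<in>UNIV. ch k a)" by (simp add: trace_def D_def)
    finally show ?thesis .
  qed
  define A :: "complex^4^4" where "A = (\<chi> k j. ch k (e j))"
  have sum_smult: "(\<Sum>j\<in>UNIV. (f j) *s v) = (\<Sum>j\<in>UNIV. f j) *s (v::complex^4)" for f :: "4 \<Rightarrow> complex" and v
    by (simp add: vec_eq_iff sum_component sum_distrib_right)
  have gmY: "gm k v* (\<chi> a b. \<Sum>j\<in>UNIV. c $ j * cmat (e j) $ a $ b) = (A *v c) $ k *s gm k" for c k
  proof -
    have "gm k v* (\<chi> a b. \<Sum>j\<in>UNIV. c $ j * cmat (e j) $ a $ b) = (\<Sum>j\<in>UNIV. c $ j *s (gm k v* cmat (e j)))"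
      by (rule vm_csum)
    also have "\<dots> = (\<Sum>j\<in>UNIV. (c $ j * ch k (e j)) *s gm k)"
      using eF by (simp add: gmE vector_smult_assoc)
    also have "\<dots> = (A *v c) $ k *s gm k"
      by (simp add: sum_smult A_def matrix_vector_mult_def mult.commute)
    finally show ?thesis .
  qed
  have A_inj: "c = 0" if Ac: "A *v c = 0" for c
  proof -
    define Y :: "complex^4^4" where "Y = (\<chi> a b. \<Sum>j\<in>UNIV. c $ j * cmat (e j) $ a $ b)"
    have "Y = 0"
      by (rule gm_ext) (simp add: Y_def gmY Ac)
    then have Yab: "(\<Sum>j\<in>UNIV. c $ j * complex_of_real (e j $ a $ b)) = 0" for a b
      unfolding Y_def cmat_def by (simp add: vec_eq_iff)
    have re: "(\<Sum>j\<in>UNIV. Re (c $ j) *\<^sub>R e j) = 0"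
    proof -
      have "Re (\<Sum>j\<in>UNIV. c $ j * complex_of_real (e j $ a $ b)) = 0" for a b using Yab by simp
      then show ?thesis by (simp add: vec_eq_iff sum_component Re_sum)
    qed
    have im: "(\<Sum>j\<in>UNIV. Im (c $ j) *\<^sub>R e j) = 0"
    proof -
      have "Im (\<Sum>j\<in>UNIV. c $ j * complex_of_real (e j $ a $ b)) = 0" for a b using Yab by simp
      then show ?thesis by (simp add: vec_eq_iff sum_component Im_sum)
    qed
    have "Re (c $ j) = 0" "Im (c $ j) = 0" for j
      using real_indep[of e, OF _ qind re] real_indep[of e, OF _ qind im] eF Frat by auto
    then show ?thesis by (simp add: vec_eq_iff complex_eq_iff)
  qed
  have "\<exists>B. B ** A = mat 1" using A_inj matrix_left_invertible_ker by blast
  then have detA: "det A \<noteq> 0" by (metis invertible_left_inverse invertible_det_nz)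
  define \<Gamma> where "\<Gamma> = transpose A ** A"
  have \<Gamma>e: "\<Gamma> $ j $ l = complex_of_real (trace (e j ** e l))" for j l
  proof -
    have "\<Gamma> $ j $ l = (\<Sum>k\<in>UNIV. ch k (e j) * ch k (e l))"
      by (simp add: \<Gamma>_def matrix_matrix_mult_def transpose_def A_def)
    also have "\<dots> = (\<Sum>k\<in>UNIV. ch k (e j ** e l))" using eF by (simp add: ch_mult)
    also have "\<dots> = complex_of_real (trace (e j ** e l))"
      using eF Fmul by (simp add: trace_ch)
    finally show ?thesis .
  qed
  define E where "E = reflex_field F \<phi>1 \<phi>2"
  have subE: "subf E" by (simp add: E_def reflex_field_def gen_subfield_subf)
  have SE: "\<phi>1 a + \<phi>2 a \<in> E" if "a \<in> F" for a
  proof -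
    have "\<phi>1 a + \<phi>2 a \<in> {\<phi>1 a + \<phi>2 a | a. a \<in> F}" using that by blast
    then show ?thesis unfolding E_def reflex_field_def by (rule subsetD[OF gen_subfield_sup])
  qed
  have trE: "complex_of_real (trace a) \<in> E" if "rat_mat a" for a
  proof (rule subf_real_rat[OF subE])
    show "trace a \<in> \<rat>" using that unfolding trace_def rat_mat_def by (intro Rats_sum) blast
  qed
  have \<Gamma>E: "\<Gamma> $ j $ l \<in> E" for j l
    unfolding \<Gamma>e using eF Frat by (intro trE rat_mat_mult) auto
  define tv :: "complex^4" where "tv = (\<chi> k. tt k)"
  define \<tau> where "\<tau> = transpose A *v tv"
  have \<tau>E: "\<tau> $ j \<in> E" for j
  proof -
    have "\<tau> $ j = \<phi>1 (e j) + \<phi>2 (e j) - cnj (\<phi>1 (e j)) - cnj (\<phi>2 (e j))"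
      by (simp add: \<tau>_def tv_def matrix_vector_mult_def transpose_def A_def sum_4 ch_def tt_def)
    moreover have "complex_of_real (trace (e j)) = \<phi>1 (e j) + \<phi>2 (e j) + cnj (\<phi>1 (e j)) + cnj (\<phi>2 (e j))"
      using trace_ch[of "e j"] eF by (simp add: sum_4 ch_def)
    ultimately have "\<tau> $ j = 2 * (\<phi>1 (e j) + \<phi>2 (e j)) - complex_of_real (trace (e j))"
      by simp
    moreover have "2 * (\<phi>1 (e j) + \<phi>2 (e j)) \<in> E"
      using eF SE subE by (metis mult_2 subf_add)
    moreover have "complex_of_real (trace (e j)) \<in> E" using eF Frat trE by blast
    ultimately show ?thesis using subE by (simp add: subf_diff)
  qed
  have det\<Gamma>: "det \<Gamma> \<noteq> 0" using detA by (simp add: \<Gamma>_def det_mul)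
  define cc where "cc = (\<chi> k. det (\<chi> i j. if j = k then \<tau> $ i else \<Gamma> $ i $ j) / det \<Gamma>)"
  have \<Gamma>c: "\<Gamma> *v cc = \<tau>" using cramer[OF det\<Gamma>] cc_def by blast
  have ccE: "cc $ k \<in> E" for k
    unfolding cc_def using subE \<Gamma>E \<tau>E by (auto intro!: subf_div subf_det)
  have Acc: "A *v cc = tv"
  proof -
    have "transpose A *v (A *v cc - tv) = \<Gamma> *v cc - \<tau>"
      unfolding \<Gamma>_def \<tau>_def by (simp only: matrix_vector_mult_diff_distrib matrix_vector_mul_assoc)
    then have "transpose A *v (A *v cc - tv) = 0" by (simp add: \<Gamma>c)
    moreover have "det (transpose A) \<noteq> 0" using detA by simp
    then have "\<exists>B. B ** transpose A = mat 1" by (metis invertible_left_inverse invertible_det_nz)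
    ultimately have "A *v cc - tv = 0" using matrix_left_invertible_ker by blast
    then show ?thesis by simp
  qed
  define T :: "complex^4^4" where "T = (\<chi> a b. \<Sum>j\<in>UNIV. cc $ j * cmat (e j) $ a $ b)"
  have vm_sc: "x v* (\<chi> a b. z * (M::complex^4^4) $ a $ b) = z *s (x v* M)" for x z M
    by (simp add: vec_eq_iff vector_matrix_mult_def sum_distrib_left mult_ac)
  have CIT: "cmat I = (\<chi> a b. \<i> * T $ a $ b)"
  proof (rule gm_ext)
    fix k
    have "gm k v* T = tt k *s gm k" unfolding T_def gmY Acc by (simp add: tv_def)
    then show "gm k v* cmat I = gm k v* (\<chi> a b. \<i> * T $ a $ b)"
      by (simp add: vm_sc gmI vector_smult_assoc)
  qed
  have Ient: "complex_of_real (I $ m $ i) = \<i> * (\<Sum>l\<in>UNIV. cc $ l * complex_of_real (e l $ m $ i))" for m i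
  proof -
    have "cmat I $ m $ i = \<i> * T $ m $ i" using CIT by simp
    then show ?thesis by (simp add: cmat_def T_def)
  qed
  define W where "W l = transpose (e l) ** G" for l
  have Went: "W l $ i $ j = (\<Sum>m\<in>UNIV. e l $ m $ i * G $ m $ j)" for l i j
    by (simp add: W_def matrix_matrix_mult_def transpose_def)
  define \<omega> where "\<omega> = kaehler_form G I"
  have eq1: "\<i> * cmat \<omega> $ i $ j = - (\<Sum>l\<in>UNIV. cc $ l * complex_of_real (W l $ i $ j))" for i j
  proof -
    have "\<i> * cmat \<omega> $ i $ j = \<i> * (\<Sum>m\<in>UNIV. complex_of_real (I $ m $ i) * complex_of_real (G $ m $ j))"
      by (simp add: \<omega>_def cmat_def kaehler_form_def)
    also have "\<dots> = \<i> * (\<Sum>m\<in>UNIV. \<i> * (\<Sum>l\<in>UNIV. cc $ l * complex_of_real (e l $ m $ i)) * complex_of_real (G $ m $ j))"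
      by (simp add: Ient)
    also have "\<dots> = - (\<Sum>m\<in>UNIV. \<Sum>l\<in>UNIV. cc $ l * (complex_of_real (e l $ m $ i) * complex_of_real (G $ m $ j)))"
      by (simp add: sum_distrib_left sum_distrib_right mult_ac sum_negf)
    also have "\<dots> = - (\<Sum>l\<in>UNIV. cc $ l * (\<Sum>m\<in>UNIV. complex_of_real (e l $ m $ i) * complex_of_real (G $ m $ j)))"
      by (subst sum.swap) (simp add: sum_distrib_left)
    also have "\<dots> = - (\<Sum>l\<in>UNIV. cc $ l * complex_of_real (W l $ i $ j))"
      by (simp add: Went)
    finally show ?thesis .
  qed
  have oma: "transpose \<omega> = - \<omega>"
  proof -
    have "transpose \<omega> = G ** I" by (simp add: \<omega>_def kaehler_eq matrix_transpose_mul Gsym)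
    also have "\<dots> = - \<omega>" by (simp add: \<omega>_def kaehler_eq inv_swap[OF II GI])
    finally show ?thesis .
  qed
  have oma': "\<omega> $ j $ i = - \<omega> $ i $ j" for i j
  proof -
    have "transpose \<omega> $ i $ j = (- \<omega>) $ i $ j" using oma by simp
    then show ?thesis by (simp add: transpose_def)
  qed
  have Gs: "G $ i $ j = G $ j $ i" for i j
  proof -
    have "transpose G $ j $ i = G $ j $ i" using Gsym by simp
    then show ?thesis by (simp add: transpose_def)
  qed
  define Bm where "Bm l = (1/2) *\<^sub>R (transpose (e l) ** G - G ** e l)" for l
  have Bment: "Bm l $ i $ j = (1/2) * (W l $ i $ j - W l $ j $ i)" for l i j
    by (simp add: Bm_def Went matrix_matrix_mult_def Gs mult.commute transpose_def)
  have final: "\<i> * cmat \<omega> $ i $ j = (\<Sum>l\<in>UNIV. (- cc $ l) * complex_of_real (Bm l $ i $ j))" for i j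
  proof -
    have "\<i> * cmat \<omega> $ i $ j = (1/2) * (\<i> * cmat \<omega> $ i $ j - \<i> * cmat \<omega> $ j $ i)"
      using oma'[of i j] by (simp add: cmat_def field_simps)
    also have "\<dots> = (1/2) * ((\<Sum>l\<in>UNIV. cc $ l * complex_of_real (W l $ j $ i)) - (\<Sum>l\<in>UNIV. cc $ l * complex_of_real (W l $ i $ j)))"
      by (simp add: eq1)
    also have "\<dots> = (\<Sum>l\<in>UNIV. (- cc $ l) * complex_of_real (Bm l $ i $ j))"
      by (simp add: Bment sum_distrib_left algebra_simps sum_subtractf flip: sum_negf)
    finally show ?thesis .
  qed
  have BmH: "Bm l \<in> calH2 I" for l
  proof -
    have el: "e l \<in> F" using eF by blast
    have rat: "rat_mat (Bm l)" unfolding Bm_def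
      using Frat[OF el] Grat by (intro rat_mat_scale rat_mat_diff rat_mat_mult rat_mat_transpose) auto
    have t1: "transpose (transpose (e l) ** G) = G ** e l" by (simp add: matrix_transpose_mul Gsym)
    have t2: "transpose (G ** e l) = transpose (e l) ** G" by (simp add: matrix_transpose_mul Gsym)
    have td: "transpose (X - Y) = transpose X - transpose (Y::mat4)" for X Y
      by (simp add: vec_eq_iff transpose_def)
    have ant: "transpose (Bm l) = - Bm l"
      unfolding Bm_def transpose_scaleR td t1 t2 by (simp add: scaleR_diff_right)
    have inv: "transpose I ** Bm l ** I = Bm l"
    proof -
      have 1: "transpose I ** (transpose (e l) ** G) ** I = transpose (e l) ** G"
      proof -
        have "transpose I ** transpose (e l) = transpose (e l) ** transpose I"
          by (metis matrix_transpose_mul commute[OF el])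
        then have "transpose I ** (transpose (e l) ** G) ** I = transpose (e l) ** (transpose I ** G ** I)"
          by (simp add: matrix_mul_assoc)
        then show ?thesis by (simp add: GI)
      qed
      have 2: "transpose I ** (G ** e l) ** I = G ** e l"
      proof -
        have "transpose I ** (G ** e l) ** I = (transpose I ** G ** I) ** e l"
          by (simp add: matrix_mul_assoc commute[OF el] flip: matrix_mul_assoc[of _ "e l" I])
        then show ?thesis by (simp add: GI)
      qed
      show ?thesis
        by (simp add: Bm_def matrix_scalar_ac scalar_matrix_assoc mdiff_l mdiff_r 1 2 scaleR_diff_right flip: scalar_matrix_assoc)
    qed
    show ?thesis using rat ant inv bil_inv_mat[of "Bm l" I]
      by (simp add: calH2_def H2Q_def H11R_def antisym_mat_def)
  qed
  obtain h where h: "bij_betw h {0..<card (UNIV::4 set)} (UNIV::4 set)"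
    using ex_bij_betw_nat_finite[of "UNIV::4 set"] by auto
  then have h4: "bij_betw h {..<4} UNIV" by (simp add: lessThan_atLeast0)
  define c' where "c' k = - cc $ h k" for k
  define A' where "A' k = Bm (h k)" for k
  have 1: "\<forall>k<4. c' k \<in> reflex_field F \<phi>1 \<phi>2 \<and> A' k \<in> calH2 I"
    using ccE subE BmH by (auto simp: E_def c'_def A'_def intro: subf_neg)
  have 2: "(\<chi> i j. \<i> * cmat (kaehler_form G I) $ i $ j) = (\<chi> i j. \<Sum>k<4. c' k * complex_of_real (A' k $ i $ j))"
  proof -
    have "(\<Sum>k<4. c' k * complex_of_real (A' k $ i $ j)) = (\<Sum>l\<in>UNIV. (- cc $ l) * complex_of_real (Bm l $ i $ j))" for i j
      using sum.reindex_bij_betw[OF h4, of "\<lambda>l. (- cc $ l) * complex_of_real (Bm l $ i $ j)"] by (simp add: c'_def A'_def)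
    then show ?thesis using final by (simp add: vec_eq_iff \<omega>_def)
  qed
  show ?thesis unfolding in_tensor_def
    by (rule exI[of _ 4], rule exI[of _ c'], rule exI[of _ A']) (use 1 2 in blast)
qed


theorem theorem4p5:
  fixes G B I :: mat4
  assumes "is_metric G" and "rat_mat G"
    and "antisym_mat B" and "rat_mat B"
    and "is_complex_structure I" and "polarizable I" and "compatible G I"
  shows "kaehler_form G I \<in> span (calH2 I) \<and>
         (\<forall>F \<phi>1 \<phi>2. CM_algebra I F \<and> CM_type I F \<phi>1 \<phi>2 \<longrightarrow>
           in_tensor (calH2 I) (reflex_field F \<phi>1 \<phi>2) (\<chi> i j. \<i> * cmat (kaehler_form G I) $ i $ j))"
  using part1[OF assms(1,2,5,6,7)] part2[OF assms(1,2,5,7)] by blast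

end
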